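(* Consider the Que Sera Consensus (QSC) protocol, as described in the context, running on $n$ nodes atop a full-spread threshold synchronous broadcast primitive $\mathrm{TSB}(t_r,t_b,n)$ with $t_r>0$ and $t_b>0$. If the network's choice of the sets $N_R$ and $N_B$ (determining which messages each node receives and learns were reliably broadcast) is independent of the proposal priorities, and $p_t$ is the probability that two nodes tie for highest priority in a round, then each node delivers a history in each round independently with probability at least $t_b/n-p_t$.
   Context: Threshold synchronous broadcast (TSB). A group of $n$ nodes, numbered $1,\dots,n$, operates in integer logical time-steps $0,1,2,\dots$. Nodes may fail only by crashing permanently. In each time-step every non-failed node calls $\mathrm{Broadcast}(m)$ exactly once; the call returns a pair $(R,B)$ of message sets. A primitive provides $\mathrm{TSB}(t_r,t_b,t_s)$ if: (lock-step synchrony) a call to $\mathrm{Broadcast}(m)$ at step $s$ returns at step $s+1$ unless the node fails before reaching step $s+1$; (receive threshold) if node $i$'s call at step $s$ returns $(R,B)$, there is $N_R\subseteq\{1,\dots,n\}$ with $|N_R|\ge t_r$ such that $R$ is exactly the set of messages broadcast by the nodes in $N_R$ during step $s$; (broadcast threshold) there is $N_B\subseteq\{1,\dots,n\}$ with $|N_B|\ge t_b$ such that $B$ is exactly the set of messages broadcast by the nodes in $N_B$ during step $s$; (spread threshold) if some node's call at step $s$ returns $(R,B)$ with $m'\in B$, then there are at least $t_s$ nodes whose receive sets $R$ returned from their step-$s$ calls include $m'$ (a node that fails before completing step $s$ counts if it would have received $m'$ had it not failed). The case $t_s=n$ is called full-spread. Histories and priorities. A proposal is a triple $\langle i,m,r\rangle$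 (node, message, numeric priority). A history is a finite list of proposals; $[]$ is the empty history and $\|$ is list concatenation. The priority of a nonempty history is the priority $r$ of its last proposal. A history $h$ is best in a set $H$ if $h\in H$ and no $h'\in H$ has strictly greater priority; $h$ is uniquely best in $H$ if $h\in H$ and no other $h'\ne h$ in $H$ has priority greater than or equal to that of $h$. QSC protocol. It is parameterized by functions ChooseMessage (returns some message, possibly empty), Deliver (passes a history to the application), RandomValue (returns a value drawn using node-private randomness, independently on each node, from a fixed nontrivial distribution that is the same on every node), and Broadcast (the TSB primitive). Each node $i$ runs: set $h\leftarrow[]$; then forever repeat a consensus round: $m\leftarrow\mathrm{ChooseMessage}()$; $r\leftarrow\mathrm{RandomValue}()$; $h'\leftarrow h\,\|\,[\langle i,m,r\rangle]$; $(R',B')\leftarrow\mathrm{Broadcast}(h')$; $h''\leftarrow$ any best history in $B'$; $(R'',B'')\leftarrow\mathrm{Broadcast}(h'')$; $h\leftarrow$ any best history in $R''$; if $h\in B''$ and $h$ is uniquely best in $R'$, call $\mathrm{Deliver}(h)$. Each round occupies two time-steps. *)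

theory Defs
  imports "HOL-Probability.Probability"
begin

text \<open>Nodes are natural numbers 1..n; priorities are real numbers.
  A proposal is a triple (node, message, priority); a history is a list of proposals.\<close>

type_synonym 'm proposal = "nat \<times> 'm \<times> real"
type_synonym 'm history = "'m proposal list"

definition prio :: "'m history \<Rightarrow> real" where
  "prio h = snd (snd (last h))"

definition is_best :: "'m history \<Rightarrow> 'm history set \<Rightarrow> bool" where
  "is_best h H \<longleftrightarrow> h \<in> H \<and> (\<forall>h'\<in>H. \<not> prio h' > prio h)"

definition uniquely_best :: "'m history \<Rightarrow> 'm history set \<Rightarrow> bool" where
  "uniquely_best h H \<longleftrightarrow> h \<in> H \<and> (\<forall>h'\<in>H. h' \<noteq> h \<longrightarrow> \<not> prio h' \<ge> prio h)"

text \<open>The network is described by: alive t j (node j has not crashed and calls Broadcast at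
  time-step t), and for every step t and node i the node sets NR t i and NB t i.
  msg t j is the message broadcast by node j at step t.  R = msg t ` NR t i and
  B = msg t ` NB t i.  For a node that fails, NR t i is the receive set it would have had
  (used by the spread threshold).\<close>

definition is_TSB ::
  "nat \<Rightarrow> nat \<Rightarrow> nat \<Rightarrow> nat \<Rightarrow> (nat \<Rightarrow> nat \<Rightarrow> bool) \<Rightarrow> (nat \<Rightarrow> nat \<Rightarrow> nat set)
     \<Rightarrow> (nat \<Rightarrow> nat \<Rightarrow> nat set) \<Rightarrow> (nat \<Rightarrow> nat \<Rightarrow> 'a) \<Rightarrow> bool" where
  "is_TSB n tr tb ts alive NR NB msg \<longleftrightarrow>
     (\<forall>t i. i \<in> {1..n} \<longrightarrow> NR t i \<subseteq> {j \<in> {1..n}. alive t j}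
                        \<and> NB t i \<subseteq> {j \<in> {1..n}. alive t j}) \<and>
     (\<forall>t i. i \<in> {1..n} \<longrightarrow> alive (Suc t) i \<longrightarrow> card (NR t i) \<ge> tr \<and> card (NB t i) \<ge> tb) \<and>
     (\<forall>t i m. i \<in> {1..n} \<longrightarrow> alive (Suc t) i \<longrightarrow> m \<in> msg t ` NB t i \<longrightarrow>
          card {j \<in> {1..n}. m \<in> msg t ` NR t j} \<ge> ts)"

text \<open>omega (s, j) is the value returned by RandomValue at node j in round s.
  chooseMsg j s h is ChooseMessage at node j in round s with current history h;
  pickBest j t H is the (arbitrary) choice of a best history in H made by node j at step t.
  Round s occupies time-steps 2s and 2s+1.  H is the vector of histories at round start.\<close>

definition qsc_h1 ::
  "(nat \<Rightarrow> nat \<Rightarrow> 'm history \<Rightarrow> 'm) \<Rightarrow> (nat \<Rightarrow> 'm history) \<Rightarrow> nat \<Rightarrow> (nat \<times> nat \<Rightarrow> real)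
     \<Rightarrow> nat \<Rightarrow> 'm history" where
  "qsc_h1 chooseMsg H s \<omega> l = H l @ [(l, chooseMsg l s (H l), \<omega> (s, l))]"

definition qsc_h2 ::
  "(nat \<Rightarrow> nat \<Rightarrow> 'm history \<Rightarrow> 'm) \<Rightarrow> (nat \<Rightarrow> nat \<Rightarrow> 'm history set \<Rightarrow> 'm history)
     \<Rightarrow> (nat \<Rightarrow> nat \<Rightarrow> nat set) \<Rightarrow> (nat \<Rightarrow> 'm history) \<Rightarrow> nat \<Rightarrow> (nat \<times> nat \<Rightarrow> real)
     \<Rightarrow> nat \<Rightarrow> 'm history" where
  "qsc_h2 chooseMsg pickBest NB H s \<omega> k = pickBest k (2 * s) (qsc_h1 chooseMsg H s \<omega> ` NB (2 * s) k)"

primrec qsc_hist ::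
  "(nat \<Rightarrow> nat \<Rightarrow> 'm history \<Rightarrow> 'm) \<Rightarrow> (nat \<Rightarrow> nat \<Rightarrow> 'm history set \<Rightarrow> 'm history)
     \<Rightarrow> (nat \<Rightarrow> nat \<Rightarrow> nat set) \<Rightarrow> (nat \<Rightarrow> nat \<Rightarrow> nat set) \<Rightarrow> (nat \<times> nat \<Rightarrow> real)
     \<Rightarrow> nat \<Rightarrow> nat \<Rightarrow> 'm history" where
  "qsc_hist chooseMsg pickBest NR NB \<omega> 0 = (\<lambda>_. [])"
| "qsc_hist chooseMsg pickBest NR NB \<omega> (Suc s) =
     (\<lambda>j. pickBest j (2 * s+1)
            (qsc_h2 chooseMsg pickBest NB (qsc_hist chooseMsg pickBest NR NB \<omega> s) s \<omega> ` NR (2 * s+1) j))"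

definition qsc_msg ::
  "(nat \<Rightarrow> nat \<Rightarrow> 'm history \<Rightarrow> 'm) \<Rightarrow> (nat \<Rightarrow> nat \<Rightarrow> 'm history set \<Rightarrow> 'm history)
     \<Rightarrow> (nat \<Rightarrow> nat \<Rightarrow> nat set) \<Rightarrow> (nat \<Rightarrow> nat \<Rightarrow> nat set) \<Rightarrow> (nat \<times> nat \<Rightarrow> real)
     \<Rightarrow> nat \<Rightarrow> nat \<Rightarrow> 'm history" where
  "qsc_msg chooseMsg pickBest NR NB \<omega> t =
     (let s = t div 2; H = qsc_hist chooseMsg pickBest NR NB \<omega> s in
      if even t then qsc_h1 chooseMsg H s \<omega> else qsc_h2 chooseMsg pickBest NB H s \<omega>)"

definition qsc_delivers ::
  "(nat \<Rightarrow> nat \<Rightarrow> 'm history \<Rightarrow> 'm) \<Rightarrow> (nat \<Rightarrow> nat \<Rightarrow> 'm history set \<Rightarrow> 'm history)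
     \<Rightarrow> (nat \<Rightarrow> nat \<Rightarrow> nat set) \<Rightarrow> (nat \<Rightarrow> nat \<Rightarrow> nat set) \<Rightarrow> (nat \<times> nat \<Rightarrow> real)
     \<Rightarrow> nat \<Rightarrow> nat \<Rightarrow> bool" where
  "qsc_delivers chooseMsg pickBest NR NB \<omega> s i =
     (let H = qsc_hist chooseMsg pickBest NR NB \<omega> s;
          h = qsc_hist chooseMsg pickBest NR NB \<omega> (Suc s) i in
      h \<in> qsc_h2 chooseMsg pickBest NB H s \<omega> ` NB (2 * s+1) i \<and>
      uniquely_best h (qsc_h1 chooseMsg H s \<omega> ` NR (2 * s) i))"

definition tie_prob :: "real measure \<Rightarrow> nat \<Rightarrow> real" where
  "tie_prob D n = measure (PiM {1..n} (\<lambda>_. D))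
     {x \<in> space (PiM {1..n} (\<lambda>_. D)). \<exists>j\<in>{1..n}. \<exists>k\<in>{1..n}. j \<noteq> k \<and> x j = x k \<and>
                                   (\<forall>l\<in>{1..n}. x l \<le> x j)}"

end

theory Submission
  imports Defs
begin


lemma core:
  fixes gA gB :: "nat \<Rightarrow> 'm history" and w :: "nat \<Rightarrow> real"
  assumes pr: "\<And>l. prio (gA l) = w l"
    and inj: "\<And>a b. gA a = gA b \<Longrightarrow> a = b"
    and gB: "\<And>k. k \<in> K \<union> R \<Longrightarrow> gB k \<in> gA ` NBe k \<and> (\<forall>l\<in>NBe k. w l \<le> prio (gB k))"
    and sub: "\<And>k. k \<in> K \<union> R \<Longrightarrow> NBe k \<subseteq> A"
    and spr: "gB ` K \<subseteq> gB ` R"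
    and best: "is_best h (gB ` R)"
  shows "(h \<in> gB ` K \<and> uniquely_best h (gA ` A)) \<longleftrightarrow> (\<exists>l\<in>\<Union>(NBe ` K). \<forall>l'\<in>A. l' \<noteq> l \<longrightarrow> w l' < w l)"
proof
  assume a: "h \<in> gB ` K \<and> uniquely_best h (gA ` A)"
  then obtain k where k: "k \<in> K" "h = gB k" by auto
  with gB obtain l where l: "l \<in> NBe k" "h = gA l" by blast
  have "\<forall>l'\<in>A. l' \<noteq> l \<longrightarrow> w l' < w l"
  proof (intro ballI impI)
    fix l' assume "l' \<in> A" "l' \<noteq> l"
    then have "gA l' \<in> gA ` A" "gA l' \<noteq> h" using l inj by auto
    then have "\<not> prio h \<le> prio (gA l')" using a unfolding uniquely_best_def by blast
    then show "w l' < w l" using l pr by simp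
  qed
  then show "\<exists>l\<in>\<Union>(NBe ` K). \<forall>l'\<in>A. l' \<noteq> l \<longrightarrow> w l' < w l" using k l by blast
next
  assume "\<exists>l\<in>\<Union>(NBe ` K). \<forall>l'\<in>A. l' \<noteq> l \<longrightarrow> w l' < w l"
  then obtain k l where k: "k \<in> K" "l \<in> NBe k" and mx: "\<forall>l'\<in>A. l' \<noteq> l \<longrightarrow> w l' < w l" by blast
  have lA: "l \<in> A" using sub k by blast
  obtain l0 where l0: "l0 \<in> NBe k" "gB k = gA l0" "w l \<le> w l0" using gB[of k] k pr by force
  have "l0 = l" using l0 mx sub[of k] k by force
  with l0 have h2k: "gB k = gA l" by simp
  have "gB k \<in> gB ` R" using spr k by blast
  with best have ge: "prio h \<ge> w l" unfolding is_best_def using h2k pr by force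
  from best obtain k' where k': "k' \<in> R" "h = gB k'" unfolding is_best_def by auto
  then obtain l1 where l1: "l1 \<in> NBe k'" "h = gA l1" using gB by blast
  have "l1 \<in> A" using sub k' l1 by blast
  have "l1 = l" using ge l1 pr mx \<open>l1 \<in> A\<close> by force
  then have hl: "h = gA l" using l1 by simp
  have "h \<in> gB ` K" using hl h2k k by force
  moreover have "uniquely_best h (gA ` A)"
    unfolding uniquely_best_def using hl lA mx pr by force
  ultimately show "h \<in> gB ` K \<and> uniquely_best h (gA ` A)" by blast
qed



lemma in_full: "S \<subseteq> {1..n} \<Longrightarrow> card S \<ge> n \<Longrightarrow> (i::nat) \<in> {1..n} \<Longrightarrow> i \<in> S"
  using card_seteq[of "{1..n}" S] by auto

lemma h1_prio: "prio (qsc_h1 chooseMsg H s \<omega> l) = \<omega> (s, l)"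
  by (simp add: qsc_h1_def prio_def)

lemma h1_inj: "qsc_h1 chooseMsg H s \<omega> a = qsc_h1 chooseMsg H s \<omega> b \<Longrightarrow> a = b"
  by (simp add: qsc_h1_def)

lemma msg_even: "qsc_msg chooseMsg pickBest NR NB \<omega> (2 * s) =
   qsc_h1 chooseMsg (qsc_hist chooseMsg pickBest NR NB \<omega> s) s \<omega>"
  by (simp add: qsc_msg_def)

lemma msg_odd: "qsc_msg chooseMsg pickBest NR NB \<omega> (2 * s + 1) =
   qsc_h2 chooseMsg pickBest NB (qsc_hist chooseMsg pickBest NR NB \<omega> s) s \<omega>"
  by (simp add: qsc_msg_def)

lemma msg_odd': "qsc_msg chooseMsg pickBest NR NB \<omega> (Suc (2 * s)) =
   qsc_h2 chooseMsg pickBest NB (qsc_hist chooseMsg pickBest NR NB \<omega> s) s \<omega>"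
  using msg_odd by simp

lemma delivers_iff:
  assumes tr_pos: "tr > 0" and tb_pos: "tb > 0"
    and tsb: "is_TSB n tr tb n alive NR NB (qsc_msg chooseMsg pickBest NR NB \<omega>)"
    and pick_best: "\<forall>j t H. finite H \<longrightarrow> H \<noteq> {} \<longrightarrow> is_best (pickBest j t H) H"
    and i_node: "i \<in> {1..n}"
    and al: "alive (2 * s + 2) i"
  shows "qsc_delivers chooseMsg pickBest NR NB \<omega> s i \<longleftrightarrow>
    (\<exists>l\<in>\<Union>(NB (2 * s) ` NB (2 * s+1) i). \<forall>l'\<in>NR (2 * s) i. l' \<noteq> l \<longrightarrow> \<omega> (s, l') < \<omega> (s, l))"
proof -
  define H where "H = qsc_hist chooseMsg pickBest NR NB \<omega> s"
  define h1 where "h1 = qsc_h1 chooseMsg H s \<omega>"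
  define h2 where "h2 = qsc_h2 chooseMsg pickBest NB H s \<omega>"
  define K where "K = NB (2 * s+1) i"
  define R where "R = NR (2 * s+1) i"
  define h where "h = pickBest i (2 * s+1) (h2 ` R)"
  have T1: "\<And>t j. j \<in> {1..n} \<Longrightarrow> NR t j \<subseteq> {j \<in> {1..n}. alive t j} \<and> NB t j \<subseteq> {j \<in> {1..n}. alive t j}"
    using tsb unfolding is_TSB_def by blast
  have T2: "\<And>t j. j \<in> {1..n} \<Longrightarrow> alive (Suc t) j \<Longrightarrow> card (NR t j) \<ge> tr \<and> card (NB t j) \<ge> tb"
    using tsb unfolding is_TSB_def by blast
  have T3: "\<And>t j m. j \<in> {1..n} \<Longrightarrow> alive (Suc t) j \<Longrightarrow> m \<in> qsc_msg chooseMsg pickBest NR NB \<omega> t ` NB t j \<Longrightarrow>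
          card {j' \<in> {1..n}. m \<in> qsc_msg chooseMsg pickBest NR NB \<omega> t ` NR t j'} \<ge> n"
    using tsb unfolding is_TSB_def by blast
  have KR: "\<And>k. k \<in> K \<union> R \<Longrightarrow> k \<in> {1..n} \<and> alive (Suc (2 * s)) k"
    using T1[OF i_node, of "2 * s+1"] unfolding K_def R_def by auto
  have fin: "\<And>t j. j \<in> {1..n} \<Longrightarrow> finite (NB t j) \<and> finite (NR t j)"
  proof -
    fix t j assume "j \<in> {1..n}"
    from T1[OF this, of t] have "NB t j \<subseteq> {1..n}" "NR t j \<subseteq> {1..n}" by auto
    then show "finite (NB t j) \<and> finite (NR t j)"
      using finite_subset by blast
  qed
  have sub: "NB (2 * s) k \<subseteq> NR (2 * s) i" if k: "k \<in> K \<union> R" for k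
  proof
    fix l assume l: "l \<in> NB (2 * s) k"
    have "h1 l \<in> qsc_msg chooseMsg pickBest NR NB \<omega> (2 * s) ` NB (2 * s) k"
      using l by (simp add: msg_even h1_def H_def)
    from T3[OF _ _ this] KR[OF k]
    have "card {j' \<in> {1..n}. h1 l \<in> h1 ` NR (2 * s) j'} \<ge> n"
      by (simp add: msg_even h1_def H_def)
    then have "i \<in> {j' \<in> {1..n}. h1 l \<in> h1 ` NR (2 * s) j'}"
      by (intro in_full[OF _ _ i_node]) auto
    then show "l \<in> NR (2 * s) i" using h1_inj unfolding h1_def by blast
  qed
  have h2p: "h2 k \<in> h1 ` NB (2 * s) k \<and> (\<forall>l\<in>NB (2 * s) k. \<omega> (s,l) \<le> prio (h2 k))" if k: "k \<in> K \<union> R" for k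
  proof -
    have "card (NB (2 * s) k) \<ge> tb" using T2 KR[OF k] by blast
    then have ne: "NB (2 * s) k \<noteq> {}" using tb_pos by auto
    have "is_best (h2 k) (h1 ` NB (2 * s) k)"
      unfolding h2_def qsc_h2_def h1_def[symmetric]
      using pick_best fin KR[OF k] ne by auto
    then show ?thesis unfolding is_best_def h1_def by (auto simp: h1_prio not_less)
  qed
  have spr: "h2 ` K \<subseteq> h2 ` R"
  proof
    fix m assume "m \<in> h2 ` K"
    then have "m \<in> qsc_msg chooseMsg pickBest NR NB \<omega> (2 * s+1) ` NB (2 * s+1) i"
      by (simp add: msg_odd msg_odd' h2_def H_def K_def)
    from T3[OF i_node _ this] al
    have "card {j' \<in> {1..n}. m \<in> h2 ` NR (2 * s+1) j'} \<ge> n"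
      by (simp add: msg_odd msg_odd' h2_def H_def)
    then have "i \<in> {j' \<in> {1..n}. m \<in> h2 ` NR (2 * s+1) j'}"
      by (intro in_full[OF _ _ i_node]) auto
    then show "m \<in> h2 ` R" by (simp add: R_def)
  qed
  have best: "is_best h (h2 ` R)"
  proof -
    have "card R \<ge> tr" using T2[OF i_node, of "2 * s+1"] al by (simp add: R_def)
    then have "R \<noteq> {}" using tr_pos by auto
    then show ?thesis unfolding h_def using pick_best fin[OF i_node] R_def by auto
  qed
  have C: "(h \<in> h2 ` K \<and> uniquely_best h (h1 ` NR (2 * s) i)) \<longleftrightarrow>
     (\<exists>l\<in>\<Union>(NB (2 * s) ` K). \<forall>l'\<in>NR (2 * s) i. l' \<noteq> l \<longrightarrow> \<omega> (s, l') < \<omega> (s, l))"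
  proof (rule core[where w="\<lambda>l. \<omega> (s,l)" and R=R and gA=h1])
    show "\<And>l. prio (h1 l) = \<omega> (s, l)" by (simp add: h1_def h1_prio)
    show "\<And>a b. h1 a = h1 b \<Longrightarrow> a = b" unfolding h1_def by (rule h1_inj)
    show "\<And>k. k \<in> K \<union> R \<Longrightarrow> h2 k \<in> h1 ` NB (2 * s) k \<and> (\<forall>l\<in>NB (2 * s) k. \<omega> (s, l) \<le> prio (h2 k))"
      by (rule h2p)
    show "\<And>k. k \<in> K \<union> R \<Longrightarrow> NB (2 * s) k \<subseteq> NR (2 * s) i" by (rule sub)
  qed (fact spr, fact best)
  have "qsc_delivers chooseMsg pickBest NR NB \<omega> s i \<longleftrightarrow> (h \<in> h2 ` K \<and> uniquely_best h (h1 ` NR (2 * s) i))"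
    unfolding qsc_delivers_def Let_def h_def h2_def h1_def H_def K_def R_def by simp
  with C show ?thesis by (simp add: K_def)
qed



lemma comp_meas:
  fixes D :: "real measure"
  assumes Db: "sets D = sets borel"
  shows "(\<lambda>x. x c) \<in> borel_measurable (PiM K (\<lambda>_. D))"
proof (cases "c \<in> K")
  case True
  have "(\<lambda>x. x c) \<in> measurable (PiM K (\<lambda>_. D)) D" using True by measurable
  then show ?thesis using measurable_cong_sets[OF refl Db] by blast
next
  case False
  have "(\<lambda>x. x c) \<in> borel_measurable (PiM K (\<lambda>_. D)) \<longleftrightarrow> (\<lambda>x. undefined::real) \<in> borel_measurable (PiM K (\<lambda>_. D))"
    by (rule measurable_cong[of "PiM K (\<lambda>_. D)" "\<lambda>x. x c" "\<lambda>x. undefined::real" borel])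
       (use False in \<open>auto simp: space_PiM PiE_def extensional_def\<close>)
  then show ?thesis by simp
qed

lemma pred_le: fixes D :: "real measure" shows "sets D = sets borel \<Longrightarrow> Measurable.pred (PiM K (\<lambda>_. D)) (\<lambda>x. x a \<le> x b)"
  unfolding pred_def by (rule borel_measurable_le[OF comp_meas comp_meas])
lemma pred_eq: fixes D :: "real measure" shows "sets D = sets borel \<Longrightarrow> Measurable.pred (PiM K (\<lambda>_. D)) (\<lambda>x. x a = x b)"
  unfolding pred_def by (rule borel_measurable_eq[OF comp_meas comp_meas])
lemma pred_less: fixes D :: "real measure" shows "sets D = sets borel \<Longrightarrow> Measurable.pred (PiM K (\<lambda>_. D)) (\<lambda>x. x a < x b)"
  unfolding pred_def by (rule borel_measurable_less[OF comp_meas comp_meas])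

lemma Qset:
  fixes D :: "real measure" and f :: "nat \<Rightarrow> 'i"
  assumes Db: "sets D = sets borel" and fU: "finite U" and fA: "finite A"
  shows "{x\<in>space (PiM K (\<lambda>_. D)). \<exists>l\<in>U. \<forall>l'\<in>A. l' \<noteq> l \<longrightarrow> x (f l') < x (f l)} \<in> sets (PiM K (\<lambda>_. D))"
proof -
  have a: "Measurable.pred (PiM K (\<lambda>_. D)) (\<lambda>x. l' \<noteq> l \<longrightarrow> x (f l') < x (f l))" for l l'
  proof (cases "l' = l")
    case True then show ?thesis by (simp add: pred_def)
  next
    case False then show ?thesis using pred_less[OF Db] by simp
  qed
  have b: "Measurable.pred (PiM K (\<lambda>_. D)) (\<lambda>x. \<forall>l'\<in>A. l' \<noteq> l \<longrightarrow> x (f l') < x (f l))" for l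
    by (rule pred_intros_finite(3)[OF fA a])
  show ?thesis
    by (rule sets.sets_Collect_finite_Ex[OF b[unfolded pred_def] fU])
qed

context
  fixes D :: "real measure" and n :: nat
  assumes Dp: "prob_space D" and Db: "sets D = sets borel" and n1: "n \<ge> 1"
begin

definition "PP = PiM {1..n} (\<lambda>_. D)"
definition "WW l = {x\<in>space PP. \<forall>l'\<in>{1..n}. l' \<noteq> l \<longrightarrow> x l' < x l}"

lemma PP_prob: "prob_space PP"
  unfolding PP_def by (rule prob_space_PiM) (use Dp in auto)

lemma WW_sets: "WW l \<in> sets PP"
proof -
  note [measurable] = comp_meas[OF Db]
  show ?thesis unfolding WW_def PP_def by measurable
qed

lemma WW_disj: "a \<noteq> b \<Longrightarrow> a \<in> {1..n} \<Longrightarrow> b \<in> {1..n} \<Longrightarrow> WW a \<inter> WW b = {}"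
  unfolding WW_def by force

lemma WW_sym:
  assumes l: "l \<in> {1..n}"
  shows "measure PP (WW l) = measure PP (WW 1)"
proof -
  define f where "f = (\<lambda>m::nat. if m = 1 then l else if m = l then 1 else m)"
  have ff: "\<And>m. f (f m) = m" unfolding f_def by auto
  have fI: "f \<in> {1..n} \<rightarrow> {1..n}" using l n1 unfolding f_def by auto
  have finj: "inj_on f {1..n}" by (metis ff inj_on_inverseI)
  define g where "g = (\<lambda>\<omega>. \<lambda>m\<in>{1..n}. (\<omega>::nat\<Rightarrow>real) (f m))"
  have dist: "distr PP PP g = PP"
    unfolding PP_def g_def
    using distr_PiM_reindex[of "{1..n}" "\<lambda>_. D" f "{1..n}"] Dp finj fI by simp
  have gm: "g \<in> measurable PP PP"
    unfolding g_def PP_def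
    by (rule measurable_restrict) (use fI in \<open>auto intro: measurable_component_singleton\<close>)
  have pre: "g -` WW 1 \<inter> space PP = WW l"
  proof (intro set_eqI iffI)
    fix x assume x: "x \<in> g -` WW 1 \<inter> space PP"
    then have sp: "x \<in> space PP" and c: "\<forall>l'\<in>{1..n}. l' \<noteq> 1 \<longrightarrow> g x l' < g x 1"
      unfolding WW_def by auto
    have "x l'' < x l" if "l'' \<in> {1..n}" "l'' \<noteq> l" for l''
    proof -
      have "f l'' \<in> {1..n}" "f l'' \<noteq> 1" using that l unfolding f_def by auto
      with c have "g x (f l'') < g x 1" by blast
      moreover have "g x (f l'') = x l''" using \<open>f l'' \<in> {1..n}\<close> ff by (simp add: g_def)
      moreover have "g x 1 = x l" using n1 by (simp add: g_def f_def)
      ultimately show ?thesis by simp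
    qed
    with sp show "x \<in> WW l" unfolding WW_def by blast
  next
    fix x assume x: "x \<in> WW l"
    then have sp: "x \<in> space PP" and c: "\<forall>l'\<in>{1..n}. l' \<noteq> l \<longrightarrow> x l' < x l"
      unfolding WW_def by auto
    have gsp: "g x \<in> space PP" using measurable_space[OF gm sp] .
    have "g x l' < g x 1" if "l' \<in> {1..n}" "l' \<noteq> 1" for l'
    proof -
      have "f l' \<in> {1..n}" "f l' \<noteq> l" using that l unfolding f_def by auto
      with c have "x (f l') < x l" by blast
      moreover have "g x l' = x (f l')" using that by (simp add: g_def)
      moreover have "g x 1 = x l" using n1 by (simp add: g_def f_def)
      ultimately show ?thesis by simp
    qed
    with gsp sp show "x \<in> g -` WW 1 \<inter> space PP" unfolding WW_def by auto
  qed
  have "measure PP (WW 1) = measure (distr PP PP g) (WW 1)" using dist by simp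
  also have "\<dots> = measure PP (g -` WW 1 \<inter> space PP)"
    by (rule measure_distr[OF gm WW_sets])
  finally show ?thesis using pre by simp
qed

definition "TT = {x \<in> space PP. \<exists>j\<in>{1..n}. \<exists>k\<in>{1..n}. j \<noteq> k \<and> x j = x k \<and> (\<forall>l\<in>{1..n}. x l \<le> x j)}"

lemma TT_tie: "measure PP TT = tie_prob D n"
  unfolding tie_prob_def TT_def PP_def by (rule refl)

lemma TT_sets: "TT \<in> sets PP"
proof -
  let ?P = "PP"
  have a: "Measurable.pred ?P (\<lambda>x. \<forall>l\<in>{1..n}. x l \<le> x j)" for j
    unfolding PP_def by (rule pred_intros_finite(3)) (auto intro: pred_le[OF Db])
  have b: "Measurable.pred ?P (\<lambda>x. j \<noteq> k \<and> x j = (x k::real) \<and> (\<forall>l\<in>{1..n}. x l \<le> x j))" for j k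
  proof (cases "j = k")
    case True then show ?thesis by simp
  next
    case False
    then show ?thesis using pred_intros_logic(3)[OF pred_eq[OF Db] a[unfolded PP_def]] by (simp add: PP_def)
  qed
  have c: "{x \<in> space ?P. \<exists>k\<in>{1..n}. j \<noteq> k \<and> x j = (x k::real) \<and> (\<forall>l\<in>{1..n}. x l \<le> x j)} \<in> sets ?P" for j
    by (rule sets.sets_Collect_finite_Ex[OF b[unfolded pred_def] finite_atLeastAtMost])
  show ?thesis unfolding TT_def
    by (rule sets.sets_Collect_finite_Ex[OF c finite_atLeastAtMost])
qed

lemma WW_union: "(\<Union>l\<in>{1..n}. WW l) = space PP - TT"
proof (intro set_eqI iffI)
  fix x assume "x \<in> (\<Union>l\<in>{1..n}. WW l)"
  then obtain l where l: "l \<in> {1..n}" "x \<in> WW l" by auto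
  then have sp: "x \<in> space PP" and c: "\<forall>l'\<in>{1..n}. l' \<noteq> l \<longrightarrow> x l' < x l"
    unfolding WW_def by auto
  have "x \<notin> TT"
  proof
    assume "x \<in> TT"
    then obtain j k where jk: "j \<in> {1..n}" "k \<in> {1..n}" "j \<noteq> k" "x j = x k" "\<forall>l\<in>{1..n}. x l \<le> x j"
      unfolding TT_def by blast
    show False
    proof (cases "j = l")
      case True
      then show ?thesis using c jk by force
    next
      case False
      then show ?thesis using c jk l by force
    qed
  qed
  with sp show "x \<in> space PP - TT" by blast
next
  fix x assume x: "x \<in> space PP - TT"
  have fin: "finite (x ` {1..n})" "x ` {1..n} \<noteq> {}" using n1 by auto
  obtain j where j: "j \<in> {1..n}" "x j = Max (x ` {1..n})"
    using Max_in[OF fin] by auto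
  have le: "\<forall>l\<in>{1..n}. x l \<le> x j" using j fin Max_ge by (metis image_eqI)
  have "x l' < x j" if "l' \<in> {1..n}" "l' \<noteq> j" for l'
  proof (rule ccontr)
    assume "\<not> x l' < x j"
    then have "x l' = x j" using le that by force
    have "\<exists>j\<in>{1..n}. \<exists>k\<in>{1..n}. j \<noteq> k \<and> x j = x k \<and> (\<forall>l\<in>{1..n}. x l \<le> x j)"
      using j(1) that le \<open>x l' = x j\<close> by (intro bexI[of _ j] bexI[of _ l']) auto
    then have "x \<in> TT" using x unfolding TT_def by blast
    then show False using x by blast
  qed
  then have "x \<in> WW j" using x unfolding WW_def by blast
  then show "x \<in> (\<Union>l\<in>{1..n}. WW l)" using j by blast
qed

lemma WW_df: "S \<subseteq> {1..n} \<Longrightarrow> disjoint_family_on WW S"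
  unfolding disjoint_family_on_def using WW_disj by blast

lemma WW1: "real n * measure PP (WW 1) = 1 - tie_prob D n"
proof -
  interpret P: prob_space PP by (rule PP_prob)
  have "measure PP (\<Union>l\<in>{1..n}. WW l) = (\<Sum>l\<in>{1..n}. measure PP (WW l))"
    by (rule P.finite_measure_finite_Union) (auto simp: WW_sets intro: WW_df)
  also have "\<dots> = (\<Sum>l\<in>{1..n}. measure PP (WW 1))" by (intro sum.cong refl WW_sym) auto
  also have "\<dots> = real n * measure PP (WW 1)" by simp
  finally have "real n * measure PP (WW 1) = measure PP (space PP - TT)" using WW_union by simp
  also have "\<dots> = 1 - measure PP TT" using P.prob_compl[OF TT_sets] by simp
  finally show ?thesis using TT_tie by simp
qed

lemma sym_bound:
  assumes U: "U \<subseteq> {1..n}"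
  shows "measure PP {x\<in>space PP. \<exists>l\<in>U. \<forall>l'\<in>{1..n}. l' \<noteq> l \<longrightarrow> x l' < x l}
     = real (card U) * (1 - tie_prob D n) / real n"
proof -
  interpret P: prob_space PP by (rule PP_prob)
  have fU: "finite U" using U finite_subset by blast
  have eq: "{x\<in>space PP. \<exists>l\<in>U. \<forall>l'\<in>{1..n}. l' \<noteq> l \<longrightarrow> x l' < x l} = (\<Union>l\<in>U. WW l)"
    unfolding WW_def by blast
  have "measure PP (\<Union>l\<in>U. WW l) = (\<Sum>l\<in>U. measure PP (WW l))"
  proof (rule P.finite_measure_finite_Union[OF fU])
    show "(\<lambda>l. WW l) ` U \<subseteq> P.events" using WW_sets by blast
    show "disjoint_family_on (\<lambda>l. WW l) U" using WW_df[OF U] by simp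
  qed
  also have "\<dots> = (\<Sum>l\<in>U. measure PP (WW 1))" by (intro sum.cong refl WW_sym) (use U in auto)
  also have "\<dots> = real (card U) * measure PP (WW 1)" by simp
  also have "\<dots> = real (card U) * (1 - tie_prob D n) / real n"
  proof -
    have "real n > 0" using n1 by simp
    then have "measure PP (WW 1) = (1 - tie_prob D n) / real n"
      using WW1 by (simp add: eq_divide_eq mult.commute)
    then show ?thesis by simp
  qed
  finally show ?thesis using eq by simp
qed

end




lemma (in prob_space) indep_events_cong':
  assumes "indep_events A I" and "\<And>i. i \<in> I \<Longrightarrow> A i = B i"
  shows "indep_events B I"
proof -
  have "(\<Inter>j\<in>J. A j) = (\<Inter>j\<in>J. B j) \<and> (\<Prod>j\<in>J. prob (A j)) = (\<Prod>j\<in>J. prob (B j))" if "J \<subseteq> I" for J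
  proof -
    note J = that
    have "(\<Inter>j\<in>J. A j) = (\<Inter>j\<in>J. B j)" using J assms(2) by (intro INF_cong) auto
    moreover have "(\<Prod>j\<in>J. prob (A j)) = (\<Prod>j\<in>J. prob (B j))" using J assms(2) by (intro prod.cong) auto
    ultimately show ?thesis by simp
  qed
  note eqs = this
  have "B ` I \<subseteq> events" using assms unfolding indep_events_def by auto
  moreover have "\<forall>J\<subseteq>I. J \<noteq> {} \<longrightarrow> finite J \<longrightarrow> prob (\<Inter>j\<in>J. B j) = (\<Prod>j\<in>J. prob (B j))"
  proof (intro allI impI)
    fix J assume J: "J \<subseteq> I" "J \<noteq> {}" "finite J"
    then have "prob (\<Inter>j\<in>J. A j) = (\<Prod>j\<in>J. prob (A j))" using assms(1) unfolding indep_events_def by blast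
    then show "prob (\<Inter>j\<in>J. B j) = (\<Prod>j\<in>J. prob (B j))" using eqs[OF J(1)] by simp
  qed
  ultimately show ?thesis unfolding indep_events_def by blast
qed

theorem lemma4:
  fixes n tr tb :: nat
    and D :: "real measure"
    and alive :: "nat \<Rightarrow> nat \<Rightarrow> bool"
    and NR NB :: "nat \<Rightarrow> nat \<Rightarrow> nat set"
    and chooseMsg :: "nat \<Rightarrow> nat \<Rightarrow> 'm history \<Rightarrow> 'm"
    and pickBest :: "nat \<Rightarrow> nat \<Rightarrow> 'm history set \<Rightarrow> 'm history"
    and i :: nat
  assumes D_prob: "prob_space D"
    and D_borel: "sets D = sets borel"
    and D_nontrivial: "\<forall>x. measure D {x} < 1"
    and tr_pos: "tr > 0"
    and tb_pos: "tb > 0"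
    and crash: "\<forall>t j. alive (Suc t) j \<longrightarrow> alive t j"
    and tsb: "\<forall>\<omega>. is_TSB n tr tb n alive NR NB (qsc_msg chooseMsg pickBest NR NB \<omega>)"
    and pick_best: "\<forall>j t H. finite H \<longrightarrow> H \<noteq> {} \<longrightarrow> is_best (pickBest j t H) H"
    and i_node: "i \<in> {1..n}"
  shows "(\<forall>s. alive (2 * s+2) i \<longrightarrow>
            prob_space.prob (PiM UNIV (\<lambda>_::nat\<times>nat. D))
              {\<omega> \<in> space (PiM UNIV (\<lambda>_::nat\<times>nat. D)). qsc_delivers chooseMsg pickBest NR NB \<omega> s i}
            \<ge> real tb / real n - tie_prob D n)
       \<and> prob_space.indep_events (PiM UNIV (\<lambda>_::nat\<times>nat. D))
           (\<lambda>s. {\<omega> \<in> space (PiM UNIV (\<lambda>_::nat\<times>nat. D)). qsc_delivers chooseMsg pickBest NR NB \<omega> s i})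
           {s. alive (2 * s+2) i}"
proof -
  define M where "M = PiM UNIV (\<lambda>_::nat\<times>nat. D)"
  have Mp: "prob_space M" unfolding M_def by (rule prob_space_PiM) (use D_prob in auto)
  interpret Mi: prob_space M by (rule Mp)
  have n1: "n \<ge> 1" using i_node by auto
  have tsb0: "is_TSB n tr tb n alive NR NB (qsc_msg chooseMsg pickBest NR NB (\<lambda>_. 0))" using tsb by blast
  have T1: "\<And>t j. j \<in> {1..n} \<Longrightarrow> NR t j \<subseteq> {j \<in> {1..n}. alive t j} \<and> NB t j \<subseteq> {j \<in> {1..n}. alive t j}"
    using tsb0 unfolding is_TSB_def by blast
  have T2: "\<And>t j. j \<in> {1..n} \<Longrightarrow> alive (Suc t) j \<Longrightarrow> card (NR t j) \<ge> tr \<and> card (NB t j) \<ge> tb"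
    using tsb0 unfolding is_TSB_def by blast
  define L where "L = {s. alive (2 * s+2) i}"
  define A where "A s = NR (2 * s) i" for s
  define U where "U s = \<Union>(NB (2 * s) ` NB (2 * s+1) i)" for s
  define Q where "Q s \<omega> = (\<exists>l\<in>U s. \<forall>l'\<in>A s. l' \<noteq> l \<longrightarrow> (\<omega>::nat\<times>nat\<Rightarrow>real) (s, l') < \<omega> (s, l))" for s \<omega>
  have AS: "A s \<subseteq> {1..n}" for s using T1[OF i_node] unfolding A_def by blast
  have US: "U s \<subseteq> {1..n}" for s
  proof
    fix l assume "l \<in> U s"
    then obtain k where k: "k \<in> NB (2 * s+1) i" "l \<in> NB (2 * s) k" unfolding U_def by blast
    then have "k \<in> {1..n}" using T1[OF i_node] by blast
    then show "l \<in> {1..n}" using T1 k by blast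
  qed
  have finA: "finite (A s)" for s using AS finite_subset by blast
  have finU: "finite (U s)" for s using US finite_subset by blast
  have Ucard: "card (U s) \<ge> tb" if al: "alive (2 * s+2) i" for s
  proof -
    have "card (NB (2 * s+1) i) \<ge> tb" using T2[OF i_node, of "2 * s+1"] al by simp
    then obtain k where k: "k \<in> NB (2 * s+1) i" using tb_pos by fastforce
    then have k1: "k \<in> {1..n}" "alive (Suc (2 * s)) k" using T1[OF i_node, of "2 * s+1"] by auto
    have "card (NB (2 * s) k) \<ge> tb" using T2[OF k1] by simp
    also have "card (NB (2 * s) k) \<le> card (U s)"
      by (rule card_mono[OF finU]) (use k in \<open>auto simp: U_def\<close>)
    finally show ?thesis .
  qed
  have Edel: "qsc_delivers chooseMsg pickBest NR NB \<omega> s i \<longleftrightarrow> Q s \<omega>" if al: "alive (2 * s+2) i" for s \<omega>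
    unfolding Q_def U_def A_def
    by (rule delivers_iff[OF tr_pos tb_pos tsb[rule_format] pick_best i_node al])
  have Qsets: "{\<omega> \<in> space M. Q s \<omega>} \<in> sets M" for s
    unfolding M_def Q_def by (rule Qset[OF D_borel finU finA])
  have Eeq: "{\<omega> \<in> space M. qsc_delivers chooseMsg pickBest NR NB \<omega> s i} = {\<omega> \<in> space M. Q s \<omega>}"
    if "s \<in> L" for s using Edel that unfolding L_def by auto
  have part1: "Mi.prob {\<omega> \<in> space M. qsc_delivers chooseMsg pickBest NR NB \<omega> s i} \<ge> real tb / real n - tie_prob D n"
    if sL: "s \<in> L" for s
  proof -
    define G where "G = {\<omega> \<in> space M. \<exists>l\<in>U s. \<forall>l'\<in>{1..n}. l' \<noteq> l \<longrightarrow> \<omega> (s, l') < \<omega> (s, l)}"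
    define G' where "G' = {x \<in> space (PP D n). \<exists>l\<in>U s. \<forall>l'\<in>{1..n}. l' \<noteq> l \<longrightarrow> x l' < x l}"
    define r where "r = (\<lambda>\<omega>::nat\<times>nat\<Rightarrow>real. \<lambda>l\<in>{1..n}. \<omega> (s, l))"
    have GQ: "G \<subseteq> {\<omega> \<in> space M. Q s \<omega>}" unfolding G_def Q_def using AS by blast
    have rm: "r \<in> measurable M (PP D n)"
      unfolding r_def M_def PP_def[OF D_prob D_borel n1]
      by (rule measurable_restrict) (auto intro: measurable_component_singleton)
    have dist: "distr M (PP D n) r = PP D n"
    proof -
      have inj: "inj_on (\<lambda>l::nat. (s, l)) {1..n}" by (simp add: inj_on_def)
      have fs: "(\<lambda>l::nat. (s, l)) \<in> {1..n} \<rightarrow> UNIV" by simp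
      have "distr (PiM UNIV (\<lambda>_::nat\<times>nat. D)) (PiM {1..n} (\<lambda>_. D)) (\<lambda>\<omega>. \<lambda>l\<in>{1..n}. \<omega> (s, l)) = PiM {1..n} (\<lambda>_. D)"
        using distr_PiM_reindex[of UNIV "\<lambda>_. D" "\<lambda>l. (s, l)" "{1..n}", OF D_prob inj fs] .
      then show ?thesis unfolding M_def PP_def[OF D_prob D_borel n1] r_def .
    qed
    have G'sets: "G' \<in> sets (PP D n)"
      unfolding G'_def PP_def[OF D_prob D_borel n1] by (rule Qset[OF D_borel finU finite_atLeastAtMost, where K="{1..n}" and f="\<lambda>l. l"])
    have pre: "r -` G' \<inter> space M = G"
    proof (intro set_eqI iffI)
      fix \<omega> assume w: "\<omega> \<in> r -` G' \<inter> space M"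
      then obtain l where l: "l \<in> U s" "\<forall>l'\<in>{1..n}. l' \<noteq> l \<longrightarrow> r \<omega> l' < r \<omega> l"
        and sp: "\<omega> \<in> space M" unfolding G'_def by auto
      have "l \<in> {1..n}" using US l by blast
      then have "\<forall>l'\<in>{1..n}. l' \<noteq> l \<longrightarrow> \<omega> (s, l') < \<omega> (s, l)" using l unfolding r_def by auto
      then show "\<omega> \<in> G" using sp l unfolding G_def by blast
    next
      fix \<omega> assume w: "\<omega> \<in> G"
      then have "\<omega> \<in> space M" unfolding G_def by blast
      then have "r \<omega> \<in> space (PP D n)" using measurable_space[OF rm] by blast
      moreover obtain l where l: "l \<in> U s" "\<forall>l'\<in>{1..n}. l' \<noteq> l \<longrightarrow> \<omega> (s, l') < \<omega> (s, l)"
        using w unfolding G_def by blast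
      moreover have "l \<in> {1..n}" using US l by blast
      ultimately have "r \<omega> \<in> G'" unfolding G'_def r_def by auto
      then show "\<omega> \<in> r -` G' \<inter> space M" using \<open>\<omega> \<in> space M\<close> by blast
    qed
    have "Mi.prob G = measure (PP D n) G'"
    proof -
      have "measure (PP D n) G' = measure (distr M (PP D n) r) G'" using dist by simp
      also have "\<dots> = measure M (r -` G' \<inter> space M)" by (rule measure_distr[OF rm G'sets])
      finally show ?thesis using pre by simp
    qed
    also have "\<dots> = real (card (U s)) * (1 - tie_prob D n) / real n"
      unfolding G'_def by (rule sym_bound[OF D_prob D_borel n1 US])
    finally have PG: "Mi.prob G = real (card (U s)) * (1 - tie_prob D n) / real n" .
    have "Mi.prob G \<le> Mi.prob {\<omega> \<in> space M. Q s \<omega>}"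
      by (rule Mi.finite_measure_mono[OF GQ Qsets])
    also have "\<dots> = Mi.prob {\<omega> \<in> space M. qsc_delivers chooseMsg pickBest NR NB \<omega> s i}"
      using Eeq[OF sL] by simp
    finally have le: "Mi.prob G \<le> Mi.prob {\<omega> \<in> space M. qsc_delivers chooseMsg pickBest NR NB \<omega> s i}" .
    interpret P: prob_space "PP D n" by (rule PP_prob[OF D_prob D_borel n1])
    define p where "p = tie_prob D n"
    have p0: "p \<ge> 0" unfolding p_def tie_prob_def by simp
    have p1: "p \<le> 1" unfolding p_def TT_tie[OF D_prob D_borel n1, symmetric] by simp
    have c1: "real (card (U s)) \<ge> real tb" using Ucard sL unfolding L_def by simp
    have c2: "real tb \<le> real n" using Ucard[of s] sL card_mono[OF _ US[of s]] unfolding L_def by fastforce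
    have npos: "real n > 0" using n1 by simp
    have "real (card (U s)) * (1 - p) \<ge> real tb * (1 - p)" using c1 p1 by (simp add: mult_right_mono)
    moreover have "real tb * (1 - p) \<ge> real tb - real n * p" using mult_left_mono[OF c2 p0] by (simp add: algebra_simps)
    ultimately have "real (card (U s)) * (1 - p) \<ge> real tb - real n * p" by linarith
    then have "real (card (U s)) * (1 - p) / real n \<ge> (real tb - real n * p) / real n"
      using npos by (simp add: divide_right_mono)
    moreover have "(real tb - real n * p) / real n = real tb / real n - p" using npos by (simp add: field_simps)
    ultimately have "real (card (U s)) * (1 - p) / real n \<ge> real tb / real n - p" by simp
    with PG le show ?thesis unfolding p_def by linarith
  qed
  have iv: "Mi.indep_vars (\<lambda>_. D) (\<lambda>c \<omega>. \<omega> c) UNIV"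
  proof (subst Mi.indep_vars_iff_distr_eq_PiM')
    show "UNIV \<noteq> {}" by simp
    show "(\<lambda>\<omega>. \<omega> c) \<in> measurable M D" if "c \<in> UNIV" for c
      unfolding M_def by (rule measurable_component_singleton) simp
    have r: "(\<lambda>x. \<lambda>c\<in>UNIV. x c) = (\<lambda>x::nat\<times>nat\<Rightarrow>real. x)" by (auto simp: restrict_def fun_eq_iff)
    have c: "(\<lambda>c. distr M D (\<lambda>x. x c)) = (\<lambda>c. D)"
      unfolding M_def using distr_PiM_component[of UNIV "\<lambda>_. D"] D_prob by (auto simp: fun_eq_iff)
    show "distr M (Pi\<^sub>M UNIV (\<lambda>_. D)) (\<lambda>x. \<lambda>c\<in>UNIV. x c) = Pi\<^sub>M UNIV (\<lambda>c. distr M D (\<lambda>x. x c))"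
      unfolding r c by (simp add: M_def)
  qed
  define K where "K s = {s} \<times> {1..n}" for s :: nat
  have iv2: "Mi.indep_vars (\<lambda>s. PiM (K s) (\<lambda>_. D)) (\<lambda>s \<omega>. restrict (\<lambda>c. \<omega> c) (K s)) L"
    by (rule Mi.indep_vars_restrict[OF iv]) (auto simp: K_def disjoint_family_on_def)
  have ie: "Mi.indep_events (\<lambda>s. {\<omega> \<in> space M. Q s (restrict (\<lambda>c. \<omega> c) (K s))}) L"
    by (rule Mi.indep_eventsI_indep_vars[OF iv2]) (unfold Q_def, rule Qset[OF D_borel finU finA])
  have Qr: "Q s (restrict (\<lambda>c. \<omega> c) (K s)) = Q s \<omega>" for s \<omega>
  proof -
    have "restrict (\<lambda>c. \<omega> c) (K s) (s, l) = \<omega> (s, l)" if "l \<in> A s \<union> U s" for l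
    proof -
      have "l \<in> {1..n}" using that AS[of s] US[of s] by blast
      then show ?thesis unfolding K_def by simp
    qed
    then show ?thesis unfolding Q_def by auto
  qed
  have ie2: "Mi.indep_events (\<lambda>s. {\<omega> \<in> space M. qsc_delivers chooseMsg pickBest NR NB \<omega> s i}) L"
    by (rule Mi.indep_events_cong'[OF ie]) (simp add: Qr Eeq)
  show ?thesis
    using part1 ie2 unfolding M_def L_def by auto
qed

end
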